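(* Let $S$ be an entropy function for a finite set $X$. Given functions $\mu,\nu:2^X\to[0,\infty)$, there exist subsets $A_1\subset\cdots\subset A_m$ and $B_1\subset\cdots\subset B_n$ of $X$ with $A_m\cap B_n=\emptyset$, and functions $\mu',\nu':2^X\to[0,\infty)$ supported on $\{A_1,\dots,A_m\}$ and $\{B_1,\dots,B_n\}$ respectively, such that $\phi_{\mu'}-\phi_{\nu'}=\phi_\mu-\phi_\nu$ and \[\sum_{A\subseteq X}(\mu'(A)+\nu'(A))S(A)\le\sum_{A\subseteq X}(\mu(A)+\nu(A))S(A).\]
   Context: An entropy function for a finite set $X$ is a function $S:2^X\to[0,\infty)$ with $S(\emptyset)=0$, $S(A)+S(B)\ge S(A\cap B)+S(A\cup B)$ and $S(A)+S(B)\ge S(A\setminus B)+S(B\setminus A)$ for all $A,B\subseteq X$. For $\mu:2^X\to\mathbb R$, $\phi_\mu:X\to\mathbb R$ is defined by $\phi_\mu(x):=\sum_{A\ni x}\mu(A)$. *)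

theory Defs
  imports Complex_Main
begin

definition entropy_function :: "'a set \<Rightarrow> ('a set \<Rightarrow> real) \<Rightarrow> bool" where
  "entropy_function X S \<longleftrightarrow>
     (\<forall>A. A \<subseteq> X \<longrightarrow> S A \<ge> 0) \<and> S {} = 0 \<and>
     (\<forall>A B. A \<subseteq> X \<longrightarrow> B \<subseteq> X \<longrightarrow> S A + S B \<ge> S (A \<inter> B) + S (A \<union> B)) \<and>
     (\<forall>A B. A \<subseteq> X \<longrightarrow> B \<subseteq> X \<longrightarrow> S A + S B \<ge> S (A - B) + S (B - A))"

definition phi :: "'a set \<Rightarrow> ('a set \<Rightarrow> real) \<Rightarrow> 'a \<Rightarrow> real" where
  "phi X \<mu> x = (\<Sum>A\<in>{A. A \<subseteq> X \<and> x \<in> A}. \<mu> A)"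

end

theory Submission imports Defs begin

lemma swap_phi:
  assumes "finite X"
  shows "(\<Sum>A\<in>Pow X. h A * sum y A) = (\<Sum>x\<in>X. y x * phi X h x)"
proof -
  have "(\<Sum>A\<in>Pow X. h A * sum y A) = (\<Sum>A\<in>Pow X. \<Sum>x\<in>{x. x \<in> X \<and> x \<in> A}. h A * y x)"
  proof (rule sum.cong[OF refl])
    fix A assume "A \<in> Pow X"
    then have "{x. x \<in> X \<and> x \<in> A} = A" by auto
    then show "h A * sum y A = (\<Sum>x\<in>{x. x \<in> X \<and> x \<in> A}. h A * y x)"
      by (simp add: sum_distrib_left)
  qed
  also have "\<dots> = (\<Sum>x\<in>X. \<Sum>A\<in>{A. A \<in> Pow X \<and> x \<in> A}. h A * y x)"
    by (rule sum.swap_restrict) (use assms in auto)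
  also have "\<dots> = (\<Sum>x\<in>X. y x * phi X h x)"
  proof (rule sum.cong[OF refl])
    fix x assume "x \<in> X"
    have "{A. A \<in> Pow X \<and> x \<in> A} = {A. A \<subseteq> X \<and> x \<in> A}" by auto
    then show "(\<Sum>A\<in>{A. A \<in> Pow X \<and> x \<in> A}. h A * y x) = y x * phi X h x"
      by (simp add: phi_def sum_distrib_left mult.commute)
  qed
  finally show ?thesis .
qed

lemma phi_add_delta:
  assumes "finite X" "P \<subseteq> X"
  shows "phi X (\<lambda>A. h A + (if A = P then c else 0)) x = phi X h x + (if x \<in> P then c else 0)"
proof -
  have "{A. A \<subseteq> X \<and> x \<in> A} \<subseteq> Pow X" by blast
  moreover have "finite (Pow X)" using assms(1) by simp
  ultimately have fin: "finite {A. A \<subseteq> X \<and> x \<in> A}" by (rule finite_subset)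
  have "phi X (\<lambda>A. h A + (if A = P then c else 0)) x = phi X h x + (\<Sum>A\<in>{A. A \<subseteq> X \<and> x \<in> A}. if A = P then c else 0)"
    unfolding phi_def by (rule sum.distrib)
  also have "(\<Sum>A\<in>{A. A \<subseteq> X \<and> x \<in> A}. if A = P then c else 0) = (if P \<in> {A. A \<subseteq> X \<and> x \<in> A} then c else 0)"
    by (rule sum.delta[OF fin])
  also have "(if P \<in> {A. A \<subseteq> X \<and> x \<in> A} then c else 0) = (if x \<in> P then c else 0)"
    using assms(2) by simp
  finally show ?thesis .
qed

lemma phi_diff: "phi X (\<lambda>A. f A - g A) x = phi X f x - phi X g x"
  by (simp add: phi_def sum_subtractf)

lemma chain_mono:
  assumes "\<forall>i\<in>{1..<m}. As i \<subset> As (Suc i)" "1 \<le> i" "i \<le> j" "j \<le> m"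
  shows "As i \<subseteq> As (j::nat)"
  using assms(3,4)
proof (induction j)
  case 0 then show ?case by simp
next
  case (Suc j)
  show ?case
  proof (cases "i = Suc j")
    case True then show ?thesis by simp
  next
    case False
    then have "i \<le> j" using Suc by simp
    then have "As i \<subseteq> As j" using Suc by simp
    moreover have "As j \<subset> As (Suc j)" using assms(1) Suc \<open>i \<le> j\<close> assms(2) by auto
    ultimately show ?thesis by auto
  qed
qed

lemma chain_rep:
  assumes "finite X" "\<forall>x\<in>X. g x \<ge> 0"
  shows "\<exists>(m::nat) (As::nat \<Rightarrow> 'a set) \<mu>'. 1 \<le> m \<and> (\<forall>i\<in>{1..m}. As i \<subseteq> {x\<in>X. g x > 0}) \<and>
     (\<forall>i\<in>{1..<m}. As i \<subset> As (Suc i)) \<and> (\<forall>A. A \<subseteq> X \<longrightarrow> \<mu>' A \<ge> 0) \<and>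
     (\<forall>A. A \<subseteq> X \<longrightarrow> \<mu>' A \<noteq> 0 \<longrightarrow> A \<in> As ` {1..m}) \<and> (\<forall>x\<in>X. phi X \<mu>' x = g x)"
  using assms(2)
proof (induction "card {x\<in>X. g x > 0}" arbitrary: g rule: less_induct)
  case less
  define P where "P = {x\<in>X. g x > 0}"
  have finP: "finite P" using assms(1) by (simp add: P_def)
  show ?case
  proof (cases "P = {}")
    case True
    then have g0: "\<forall>x\<in>X. g x = 0" using less.prems unfolding P_def by force
    show ?thesis
      apply (rule exI[of _ 1], rule exI[of _ "\<lambda>_. {}"], rule exI[of _ "\<lambda>_. 0"])
      using g0 by (auto simp: phi_def)
  next
    case False
    define c where "c = Min (g ` P)"
    have "c \<in> g ` P" unfolding c_def using finP False by (intro Min_in) auto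
    then obtain x0 where x0: "x0 \<in> P" "g x0 = c" by auto
    have cle: "\<forall>x\<in>P. c \<le> g x" unfolding c_def using finP by auto
    have cpos: "c > 0" using x0 unfolding P_def by auto
    define g' where "g' = (\<lambda>x. if x \<in> P then g x - c else g x)"
    have g'nn: "\<forall>x\<in>X. g' x \<ge> 0" using cle less.prems unfolding g'_def by auto
    have sub: "{x\<in>X. g' x > 0} \<subset> P"
    proof -
      have "{x\<in>X. g' x > 0} \<subseteq> P" unfolding g'_def P_def using less.prems by auto
      moreover have "x0 \<notin> {x\<in>X. g' x > 0}" using x0 unfolding g'_def by auto
      ultimately show ?thesis using x0(1) by (metis psubsetI)
    qed
    have "card {x\<in>X. g' x > 0} < card P" by (rule psubset_card_mono[OF finP sub])
    then have "card {x\<in>X. g' x > 0} < card {x\<in>X. g x > 0}" unfolding P_def .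
    from less.hyps[OF this g'nn] obtain m As \<mu>'' where
      h1: "1 \<le> m" and h2: "\<forall>i\<in>{1..m}. As i \<subseteq> {x\<in>X. g' x > 0}" and
      h3: "\<forall>i\<in>{1..<m}. As i \<subset> As (Suc i)" and h4: "\<forall>A. A \<subseteq> X \<longrightarrow> \<mu>'' A \<ge> 0" and
      h5: "\<forall>A. A \<subseteq> X \<longrightarrow> \<mu>'' A \<noteq> 0 \<longrightarrow> A \<in> As ` {1..m}" and
      h6: "\<forall>x\<in>X. phi X \<mu>'' x = g' x"
      by (elim exE conjE) (rule that, assumption+)
    define As' where "As' = (\<lambda>i. if i = Suc m then P else As i)"
    define \<mu>' where "\<mu>' = (\<lambda>A. \<mu>'' A + (if A = P then c else 0))"
    have PX: "P \<subseteq> X" unfolding P_def by auto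
    show ?thesis
    proof (rule exI[of _ "Suc m"], rule exI[of _ As'], rule exI[of _ \<mu>'], intro conjI)
      show "1 \<le> Suc m" by simp
      show "\<forall>i\<in>{1..Suc m}. As' i \<subseteq> {x \<in> X. 0 < g x}"
      proof
        fix i assume i: "i \<in> {1..Suc m}"
        show "As' i \<subseteq> {x \<in> X. 0 < g x}"
        proof (cases "i = Suc m")
          case True then show ?thesis unfolding As'_def P_def by simp
        next
          case False
          then have "i \<in> {1..m}" using i by auto
          then have "As i \<subseteq> {x\<in>X. g' x > 0}" using h2 by blast
          then have "As i \<subseteq> P" using psubset_imp_subset[OF sub] by (rule subset_trans)
          then show ?thesis using False unfolding As'_def P_def by simp
        qed
      qed
      show "\<forall>i\<in>{1..<Suc m}. As' i \<subset> As' (Suc i)"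
      proof
        fix i assume i: "i \<in> {1..<Suc m}"
        show "As' i \<subset> As' (Suc i)"
        proof (cases "i = m")
          case True
          have "m \<in> {1..m}" using h1 by auto
          then have "As m \<subseteq> {x\<in>X. g' x > 0}" using h2 by blast
          then have "As m \<subset> P" using sub by (rule subset_psubset_trans)
          then show ?thesis using True unfolding As'_def by simp
        next
          case False
          then have "i \<in> {1..<m}" using i by auto
          then have "As i \<subset> As (Suc i)" using h3 by blast
          then show ?thesis using False \<open>i \<in> {1..<m}\<close> unfolding As'_def by simp
        qed
      qed
      show "\<forall>A. A \<subseteq> X \<longrightarrow> 0 \<le> \<mu>' A" using h4 cpos unfolding \<mu>'_def by auto
      show "\<forall>A. A \<subseteq> X \<longrightarrow> \<mu>' A \<noteq> 0 \<longrightarrow> A \<in> As' ` {1..Suc m}"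
      proof (intro allI impI)
        fix A assume A: "A \<subseteq> X" "\<mu>' A \<noteq> 0"
        show "A \<in> As' ` {1..Suc m}"
        proof (cases "A = P")
          case True
          have "Suc m \<in> {1..Suc m}" by simp
          moreover have "A = As' (Suc m)" unfolding As'_def using True by simp
          ultimately show ?thesis by (rule rev_image_eqI)
        next
          case False
          then have "\<mu>'' A \<noteq> 0" using A unfolding \<mu>'_def by auto
          then obtain i where i: "i \<in> {1..m}" "A = As i" using h5 A by blast
          have "i \<in> {1..Suc m}" using i by simp
          moreover have "A = As' i" unfolding As'_def using i by simp
          ultimately show ?thesis by (rule rev_image_eqI)
        qed
      qed
      show "\<forall>x\<in>X. phi X \<mu>' x = g x"
      proof
        fix x assume x: "x \<in> X"
        have "phi X \<mu>' x = phi X \<mu>'' x + (if x \<in> P then c else 0)"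
          unfolding \<mu>'_def by (rule phi_add_delta[OF assms(1) PX])
        also have "\<dots> = g' x + (if x \<in> P then c else 0)" using h6 x by simp
        also have "\<dots> = g x" unfolding g'_def by simp
        finally show "phi X \<mu>' x = g x" .
      qed
    qed
  qed
qed

lemma greedy:
  fixes S :: "'a set \<Rightarrow> real"
  assumes "finite Q" "Q \<subseteq> X" "S {} = 0"
    and submod: "\<forall>A B. A \<subseteq> X \<longrightarrow> B \<subseteq> X \<longrightarrow> S A + S B \<ge> S (A \<inter> B) + S (A \<union> B)"
    and "\<forall>C\<in>\<C>. C \<subseteq> Q" "\<forall>C\<in>\<C>. \<forall>D\<in>\<C>. C \<subseteq> D \<or> D \<subseteq> C"
  shows "\<exists>w. (\<forall>E. E \<subseteq> Q \<longrightarrow> sum w E \<le> S E) \<and> sum w Q = S Q \<and> (\<forall>C\<in>\<C>. sum w C = S C)"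
  using assms(1,2,5,6)
proof (induction "card Q" arbitrary: Q \<C> rule: less_induct)
  case less
  have finQ: "finite Q" and QX: "Q \<subseteq> X" and CQ: "\<forall>C\<in>\<C>. C \<subseteq> Q"
    and ch: "\<forall>C\<in>\<C>. \<forall>D\<in>\<C>. C \<subseteq> D \<or> D \<subseteq> C" using less.prems by blast+
  show ?case
  proof (cases "Q = {}")
    case True
    have "\<forall>C\<in>\<C>. sum (\<lambda>_. 0::real) C = S C"
    proof
      fix C assume "C \<in> \<C>"
      then have "C = {}" using CQ True by blast
      then show "sum (\<lambda>_. 0::real) C = S C" using assms(3) by simp
    qed
    moreover have "\<forall>E. E \<subseteq> Q \<longrightarrow> sum (\<lambda>_. 0::real) E \<le> S E"
    proof (intro allI impI)
      fix E assume "E \<subseteq> Q"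
      then have "E = {}" using True by blast
      then show "sum (\<lambda>_. 0::real) E \<le> S E" using assms(3) by simp
    qed
    moreover have "sum (\<lambda>_. 0::real) Q = S Q" using True assms(3) by simp
    ultimately show ?thesis by blast
  next
    case False
    define \<C>' where "\<C>' = {C\<in>\<C>. C \<noteq> Q}"
    have C'sub: "\<C>' \<subseteq> \<C>" unfolding \<C>'_def by blast
    have "\<exists>x\<in>Q. \<forall>C\<in>\<C>'. C \<subseteq> Q - {x}"
    proof (cases "\<C>' = {}")
      case True
      obtain x where "x \<in> Q" using False by blast
      then show ?thesis using True by blast
    next
      case ne: False
      have "\<C>' \<subseteq> Pow Q" using CQ C'sub by blast
      moreover have "finite (Pow Q)" using finQ by simp
      ultimately have fin: "finite \<C>'" by (rule finite_subset)
      define k where "k = Max (card ` \<C>')"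
      have "k \<in> card ` \<C>'" unfolding k_def using fin ne by (intro Max_in) auto
      then obtain C0 where C0: "C0 \<in> \<C>'" "card C0 = k" by blast
      have C0Q: "C0 \<subseteq> Q" "C0 \<noteq> Q" using C0(1) CQ unfolding \<C>'_def by blast+
      have all: "\<forall>C\<in>\<C>'. C \<subseteq> C0"
      proof
        fix C assume C: "C \<in> \<C>'"
        have ck: "card C \<le> k" using C fin unfolding k_def by simp
        have disj: "C \<subseteq> C0 \<or> C0 \<subseteq> C" using C C0(1) ch C'sub by blast
        have "C \<subseteq> Q" using C C'sub CQ by blast
        then have finC: "finite C" using finQ by (rule finite_subset)
        show "C \<subseteq> C0"
        proof (rule ccontr)
          assume "\<not> C \<subseteq> C0"
          then have "C0 \<subset> C" using disj by blast
          then have "card C0 < card C" using finC by (rule psubset_card_mono[rotated])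
          then show False using ck C0(2) by simp
        qed
      qed
      have "C0 \<subset> Q" using C0Q by (rule psubsetI)
      then obtain x where x: "x \<in> Q - C0" using psubset_imp_ex_mem by blast
      have "\<forall>C\<in>\<C>'. C \<subseteq> Q - {x}"
      proof
        fix C assume "C \<in> \<C>'"
        then have "C \<subseteq> C0" using all by blast
        then show "C \<subseteq> Q - {x}" using x C0Q(1) by blast
      qed
      then show ?thesis using x by blast
    qed
    then obtain x where x: "x \<in> Q" and xC: "\<forall>C\<in>\<C>'. C \<subseteq> Q - {x}" by blast
    have lt: "card (Q - {x}) < card Q" using x finQ by (meson card_Diff1_less)
    have p1: "finite (Q - {x})" using finQ by blast
    have p2: "Q - {x} \<subseteq> X" using QX by blast
    have p4: "\<forall>C\<in>\<C>'. \<forall>D\<in>\<C>'. C \<subseteq> D \<or> D \<subseteq> C" using ch C'sub by blast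
    obtain w' where
      w1: "\<forall>E. E \<subseteq> Q - {x} \<longrightarrow> sum w' E \<le> S E" and w2: "sum w' (Q - {x}) = S (Q - {x})"
      and w3: "\<forall>C\<in>\<C>'. sum w' C = S C"
      using less.hyps[OF lt p1 p2 xC p4] by blast
    define w where "w = w'(x := S Q - S (Q - {x}))"
    have wE: "sum w E = sum w' E" if "x \<notin> E" for E
      unfolding w_def using that by (intro sum.cong) auto
    have wQ: "sum w Q = S Q"
    proof -
      have "sum w Q = w x + sum w (Q - {x})" using x finQ by (simp add: sum.remove)
      also have "sum w (Q - {x}) = sum w' (Q - {x})" by (rule wE) simp
      finally show ?thesis using w2 unfolding w_def by simp
    qed
    have g3: "\<forall>C\<in>\<C>. sum w C = S C"
    proof
      fix C assume C: "C \<in> \<C>"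
      show "sum w C = S C"
      proof (cases "C = Q")
        case True then show ?thesis using wQ by simp
      next
        case False
        then have "C \<in> \<C>'" using C unfolding \<C>'_def by blast
        then have "x \<notin> C" "sum w' C = S C" using xC w3 by blast+
        then show ?thesis using wE[of C] by simp
      qed
    qed
    have g1: "\<forall>E. E \<subseteq> Q \<longrightarrow> sum w E \<le> S E"
    proof (intro allI impI)
      fix E assume E: "E \<subseteq> Q"
      show "sum w E \<le> S E"
      proof (cases "x \<in> E")
        case False
        then have "E \<subseteq> Q - {x}" using E by blast
        then have "sum w' E \<le> S E" using w1 by blast
        then show ?thesis using wE[OF False] by simp
      next
        case True
        have finE: "finite E" using E finQ finite_subset by blast
        have "sum w E = w x + sum w (E - {x})" using True finE by (simp add: sum.remove)
        also have "sum w (E - {x}) = sum w' (E - {x})" by (rule wE) simp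
        also have "w x = S Q - S (Q - {x})" unfolding w_def by simp
        finally have eq: "sum w E = S Q - S (Q - {x}) + sum w' (E - {x})" .
        have "E - {x} \<subseteq> Q - {x}" using E by blast
        then have le1: "sum w' (E - {x}) \<le> S (E - {x})" using w1 by blast
        have i1: "E \<inter> (Q - {x}) = E - {x}" and i2: "E \<union> (Q - {x}) = Q" using E True x by blast+
        have "E \<subseteq> X" using E QX by blast
        then have "S E + S (Q - {x}) \<ge> S (E \<inter> (Q - {x})) + S (E \<union> (Q - {x}))"
          using submod p2 by blast
        then have "S E + S (Q - {x}) \<ge> S (E - {x}) + S Q" unfolding i1 i2 .
        then show ?thesis using eq le1 by linarith
      qed
    qed
    show ?thesis using g1 wQ g3 by blast
  qed
qed

theorem corollary32:
  fixes X :: "'a set" and S \<mu> \<nu> :: "'a set \<Rightarrow> real"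
  assumes "finite X"
    and "entropy_function X S"
    and "\<forall>A. A \<subseteq> X \<longrightarrow> \<mu> A \<ge> 0"
    and "\<forall>A. A \<subseteq> X \<longrightarrow> \<nu> A \<ge> 0"
  shows "\<exists>(m::nat) (n::nat) (As::nat \<Rightarrow> 'a set) (Bs::nat \<Rightarrow> 'a set) \<mu>' \<nu>'.
           1 \<le> m \<and> 1 \<le> n \<and>
           (\<forall>i\<in>{1..m}. As i \<subseteq> X) \<and> (\<forall>j\<in>{1..n}. Bs j \<subseteq> X) \<and>
           (\<forall>i\<in>{1..<m}. As i \<subset> As (Suc i)) \<and>
           (\<forall>j\<in>{1..<n}. Bs j \<subset> Bs (Suc j)) \<and>
           As m \<inter> Bs n = {} \<and>
           (\<forall>A. A \<subseteq> X \<longrightarrow> \<mu>' A \<ge> 0 \<and> \<nu>' A \<ge> 0) \<and>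
           (\<forall>A. A \<subseteq> X \<longrightarrow> \<mu>' A \<noteq> 0 \<longrightarrow> A \<in> As ` {1..m}) \<and>
           (\<forall>A. A \<subseteq> X \<longrightarrow> \<nu>' A \<noteq> 0 \<longrightarrow> A \<in> Bs ` {1..n}) \<and>
           (\<forall>x\<in>X. phi X \<mu>' x - phi X \<nu>' x = phi X \<mu> x - phi X \<nu> x) \<and>
           (\<Sum>A\<in>Pow X. (\<mu>' A + \<nu>' A) * S A) \<le> (\<Sum>A\<in>Pow X. (\<mu> A + \<nu> A) * S A)"
proof -
  note ent = assms(2)[unfolded entropy_function_def]
  have S0: "S {} = 0" using ent by blast
  have submod: "\<forall>A B. A \<subseteq> X \<longrightarrow> B \<subseteq> X \<longrightarrow> S A + S B \<ge> S (A \<inter> B) + S (A \<union> B)" using ent by blast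
  have posimod: "\<forall>A B. A \<subseteq> X \<longrightarrow> B \<subseteq> X \<longrightarrow> S A + S B \<ge> S (A - B) + S (B - A)" using ent by blast
  define f where "f = (\<lambda>x. phi X \<mu> x - phi X \<nu> x)"
  obtain m As \<mu>' where
    a1: "1 \<le> m" and a2: "\<forall>i\<in>{1..m}. As i \<subseteq> {x\<in>X. (\<lambda>x. max (f x) 0) x > 0}" and
    a3: "\<forall>i\<in>{1..<m}. As i \<subset> As (Suc i)" and a4: "\<forall>A. A \<subseteq> X \<longrightarrow> \<mu>' A \<ge> 0" and
    a5: "\<forall>A. A \<subseteq> X \<longrightarrow> \<mu>' A \<noteq> 0 \<longrightarrow> A \<in> As ` {1..m}" and
    a6: "\<forall>x\<in>X. phi X \<mu>' x = max (f x) 0"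
    using chain_rep[OF assms(1), of "\<lambda>x. max (f x) 0"] by auto
  obtain n Bs \<nu>' where
    b1: "1 \<le> n" and b2: "\<forall>i\<in>{1..n}. Bs i \<subseteq> {x\<in>X. (\<lambda>x. max (- f x) 0) x > 0}" and
    b3: "\<forall>i\<in>{1..<n}. Bs i \<subset> Bs (Suc i)" and b4: "\<forall>A. A \<subseteq> X \<longrightarrow> \<nu>' A \<ge> 0" and
    b5: "\<forall>A. A \<subseteq> X \<longrightarrow> \<nu>' A \<noteq> 0 \<longrightarrow> A \<in> Bs ` {1..n}" and
    b6: "\<forall>x\<in>X. phi X \<nu>' x = max (- f x) 0"
    using chain_rep[OF assms(1), of "\<lambda>x. max (- f x) 0"] by auto
  define N where "N = {x\<in>X. f x < 0}"
  define Q where "Q = X - N"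
  have AQ: "As i \<subseteq> Q" if "i \<in> {1..m}" for i using a2 that unfolding Q_def N_def by fastforce
  have BN: "Bs i \<subseteq> N" if "i \<in> {1..n}" for i using b2 that unfolding N_def by fastforce
  have finQ: "finite Q" "finite N" using assms(1) unfolding Q_def N_def by auto
  obtain w where w1: "\<forall>E. E \<subseteq> Q \<longrightarrow> sum w E \<le> S E" and w2: "sum w Q = S Q"
    and w3: "\<forall>C\<in>As ` {1..m}. sum w C = S C"
  proof -
    have "\<exists>w. (\<forall>E. E \<subseteq> Q \<longrightarrow> sum w E \<le> S E) \<and> sum w Q = S Q \<and> (\<forall>C\<in>As ` {1..m}. sum w C = S C)"
    proof (rule greedy[OF finQ(1) _ S0 submod])
      show "Q \<subseteq> X" unfolding Q_def by auto
      show "\<forall>C\<in>As ` {1..m}. C \<subseteq> Q" using AQ by auto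
      show "\<forall>C\<in>As ` {1..m}. \<forall>D\<in>As ` {1..m}. C \<subseteq> D \<or> D \<subseteq> C"
      proof (intro ballI)
        fix C D assume "C \<in> As ` {1..m}" "D \<in> As ` {1..m}"
        then obtain i j where "C = As i" "D = As j" "i \<in> {1..m}" "j \<in> {1..m}" by auto
        then show "C \<subseteq> D \<or> D \<subseteq> C"
          using chain_mono[OF a3, of i j] chain_mono[OF a3, of j i] by (cases "i \<le> j") auto
      qed
    qed
    then show ?thesis using that by blast
  qed
  obtain z where z1: "\<forall>E. E \<subseteq> N \<longrightarrow> sum z E \<le> S E" and z2: "sum z N = S N"
    and z3: "\<forall>C\<in>Bs ` {1..n}. sum z C = S C"
  proof -
    have "\<exists>w. (\<forall>E. E \<subseteq> N \<longrightarrow> sum w E \<le> S E) \<and> sum w N = S N \<and> (\<forall>C\<in>Bs ` {1..n}. sum w C = S C)"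
    proof (rule greedy[OF finQ(2) _ S0 submod])
      show "N \<subseteq> X" unfolding N_def by auto
      show "\<forall>C\<in>Bs ` {1..n}. C \<subseteq> N" using BN by auto
      show "\<forall>C\<in>Bs ` {1..n}. \<forall>D\<in>Bs ` {1..n}. C \<subseteq> D \<or> D \<subseteq> C"
      proof (intro ballI)
        fix C D assume "C \<in> Bs ` {1..n}" "D \<in> Bs ` {1..n}"
        then obtain i j where "C = Bs i" "D = Bs j" "i \<in> {1..n}" "j \<in> {1..n}" by auto
        then show "C \<subseteq> D \<or> D \<subseteq> C"
          using chain_mono[OF b3, of i j] chain_mono[OF b3, of j i] by (cases "i \<le> j") auto
      qed
    qed
    then show ?thesis using that by blast
  qed
  define y where "y = (\<lambda>x. if x \<in> N then - z x else w x)"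
  have ysplit: "sum y A = sum w (A \<inter> Q) - sum z (A \<inter> N)" if "A \<subseteq> X" for A
  proof -
    have finA: "finite A" using that assms(1) finite_subset by blast
    have "A = (A \<inter> Q) \<union> (A \<inter> N)" "(A \<inter> Q) \<inter> (A \<inter> N) = {}" using that unfolding Q_def by auto
    then have "sum y A = sum y (A \<inter> Q) + sum y (A \<inter> N)"
      using finA by (metis finite_Int sum.union_disjoint)
    moreover have "sum y (A \<inter> Q) = sum w (A \<inter> Q)" unfolding y_def Q_def by (intro sum.cong) auto
    moreover have "sum y (A \<inter> N) = - sum z (A \<inter> N)" unfolding y_def by (simp add: sum_negf)
    ultimately show ?thesis by simp
  qed
  have ybound: "sum y A \<le> S A \<and> - sum y A \<le> S A" if A: "A \<subseteq> X" for A
  proof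
    have zN: "sum z N = sum z (A \<inter> N) + sum z (N - A)"
      using finQ(2) by (metis Diff_Int2 Int_commute inf.idem sum.Int_Diff)
    have wQ: "sum w Q = sum w (A \<inter> Q) + sum w (Q - A)"
      using finQ(1) by (metis Diff_Int2 Int_commute inf.idem sum.Int_Diff)
    have "sum y A \<le> S (A \<inter> Q) + S (N - A) - S N"
    proof -
      have "sum w (A \<inter> Q) \<le> S (A \<inter> Q)" using w1 by auto
      moreover have "sum z (N - A) \<le> S (N - A)" using z1 by auto
      ultimately show ?thesis using ysplit[OF A] zN z2 by linarith
    qed
    also have "\<dots> \<le> S A"
    proof -
      have "A - N = A \<inter> Q" using A unfolding Q_def by auto
      moreover have "N \<subseteq> X" unfolding N_def by auto
      ultimately show ?thesis using posimod[rule_format, of A N] posimod[rule_format, of A Q] A by auto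
    qed
    finally show "sum y A \<le> S A" .
    have "- sum y A \<le> S (A \<inter> N) + S (Q - A) - S Q"
    proof -
      have "sum z (A \<inter> N) \<le> S (A \<inter> N)" using z1 by auto
      moreover have "sum w (Q - A) \<le> S (Q - A)" using w1 by auto
      ultimately show ?thesis using ysplit[OF A] wQ w2 by linarith
    qed
    also have "\<dots> \<le> S A"
    proof -
      have "A - Q = A \<inter> N" using A unfolding Q_def N_def by auto
      moreover have "Q \<subseteq> X" unfolding Q_def by auto
      ultimately show ?thesis using posimod[rule_format, of A N] posimod[rule_format, of A Q] A by auto
    qed
    finally show "- sum y A \<le> S A" .
  qed
  have phid: "\<forall>x\<in>X. phi X \<mu>' x - phi X \<nu>' x = phi X \<mu> x - phi X \<nu> x"
    using a6 b6 unfolding f_def by auto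
  have cost: "(\<Sum>A\<in>Pow X. (\<mu>' A + \<nu>' A) * S A) \<le> (\<Sum>A\<in>Pow X. (\<mu> A + \<nu> A) * S A)"
  proof -
    have "(\<Sum>A\<in>Pow X. (\<mu>' A + \<nu>' A) * S A) = (\<Sum>A\<in>Pow X. (\<mu>' A - \<nu>' A) * sum y A)"
    proof (rule sum.cong[OF refl])
      fix A assume "A \<in> Pow X"
      then have A: "A \<subseteq> X" by auto
      have "\<mu>' A * S A = \<mu>' A * sum y A"
      proof (cases "\<mu>' A = 0")
        case False
        then obtain i where i: "i \<in> {1..m}" "A = As i" using a5 A by auto
        then have "A \<subseteq> Q" using AQ by auto
        then have "sum y A = sum w A" unfolding y_def Q_def by (intro sum.cong) auto
        moreover have "sum w A = S A" using w3 i by auto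
        ultimately show ?thesis by simp
      next
        case True then show ?thesis by simp
      qed
      moreover have "\<nu>' A * S A = - \<nu>' A * sum y A"
      proof (cases "\<nu>' A = 0")
        case False
        then obtain i where i: "i \<in> {1..n}" "A = Bs i" using b5 A by auto
        then have "A \<subseteq> N" using BN by auto
        then have "sum y A = sum (\<lambda>x. - z x) A" unfolding y_def by (intro sum.cong) auto
        then have "sum y A = - sum z A" by (simp add: sum_negf)
        moreover have "sum z A = S A" using z3 i by auto
        ultimately show ?thesis by simp
      next
        case True then show ?thesis by simp
      qed
      ultimately show "(\<mu>' A + \<nu>' A) * S A = (\<mu>' A - \<nu>' A) * sum y A" by (simp add: algebra_simps)
    qed
    also have "\<dots> = (\<Sum>x\<in>X. y x * phi X (\<lambda>A. \<mu>' A - \<nu>' A) x)" by (rule swap_phi[OF assms(1)])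
    also have "\<dots> = (\<Sum>x\<in>X. y x * phi X (\<lambda>A. \<mu> A - \<nu> A) x)"
      using phid by (intro sum.cong) (auto simp: phi_diff)
    also have "\<dots> = (\<Sum>A\<in>Pow X. (\<mu> A - \<nu> A) * sum y A)" by (rule swap_phi[OF assms(1), symmetric])
    also have "\<dots> \<le> (\<Sum>A\<in>Pow X. (\<mu> A + \<nu> A) * S A)"
    proof (rule sum_mono)
      fix A assume "A \<in> Pow X"
      then have A: "A \<subseteq> X" by auto
      have "\<mu> A * sum y A \<le> \<mu> A * S A" using ybound[OF A] assms(3) A by (intro mult_left_mono) auto
      moreover have "\<nu> A * (- sum y A) \<le> \<nu> A * S A" using ybound[OF A] assms(4) A by (intro mult_left_mono) auto
      ultimately show "(\<mu> A - \<nu> A) * sum y A \<le> (\<mu> A + \<nu> A) * S A" by (simp add: algebra_simps)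
    qed
    finally show ?thesis .
  qed
  have disj: "As m \<inter> Bs n = {}"
  proof -
    have "As m \<subseteq> Q" using AQ a1 by auto
    moreover have "Bs n \<subseteq> N" using BN b1 by auto
    ultimately show ?thesis unfolding Q_def by blast
  qed
  have AX: "\<forall>i\<in>{1..m}. As i \<subseteq> X" using AQ unfolding Q_def by blast
  have BX: "\<forall>j\<in>{1..n}. Bs j \<subseteq> X" using BN unfolding N_def by blast
  have nn: "\<forall>A. A \<subseteq> X \<longrightarrow> \<mu>' A \<ge> 0 \<and> \<nu>' A \<ge> 0" using a4 b4 by blast
  show ?thesis
    apply (rule exI[of _ m], rule exI[of _ n], rule exI[of _ As], rule exI[of _ Bs],
           rule exI[of _ \<mu>'], rule exI[of _ \<nu>'])
    using a1 b1 AX BX a3 b3 disj nn a5 b5 phid cost by (intro conjI)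
qed

end
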